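(* For every instance, every allocation selected by Generalized PAV satisfies EJR-1.
   Context: Model: There is a set of agents $N=\{1,\dots,n\}$. The resource $R$ consists of a cake $C=[0,c]$ for a real $c\ge 0$ and a set of indivisible goods $G=\{g_1,\dots,g_m\}$ for an integer $m\ge 0$, with $\max(c,m)>0$. A piece of cake is a union of finitely many disjoint closed subintervals of $C$; its length $\ell(\cdot)$ is the sum of the lengths of its intervals. A bundle $R'=(C',G')$ consists of a piece of cake $C'\subseteq C$ and a set $G'\subseteq G$; its size is $s(R')=\ell(C')+|G'|$. Each agent $i$ approves a bundle $R_i=(C_i,G_i)$, and her utility for a bundle $R'$ is $u_i(R')=\ell(C_i\cap C')+|G_i\cap G'|$. A parameter $\alpha\in(0,c+m]$ is given; an allocation is a bundle $A$ with $s(A)\le\alpha$. For a real $t>0$, $N^*\subseteq N$ is $t$-cohesive if $|N^*|\ge t n/\alpha$ and $s(\bigcap_{i\in N^*}R_i)\ge t$. EJR-1: an allocation $A$ satisfies EJR-1 if for every real $t>0$ and every $t$-cohesive group $N^*$, some $j\in N^*$ has $u_j(A)>t-1$. Generalized harmonic numbers: $H_x\coloneqq\sum_{k=1}^\infty\frac{x}{k(x+k)}$ for real $x\ge0$. Generalized PAV selects an allocation $R'$ with $s(R')\le\alpha$ maximizing $\sum_{i\in N}H_{u_i(R')}$. *)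

theory Defs
  imports "HOL-Analysis.Analysis"
begin

definition is_piece :: "real \<Rightarrow> real set \<Rightarrow> bool" where
  "is_piece c S \<longleftrightarrow> (\<exists>ivs :: (real \<times> real) list.
     (\<forall>p\<in>set ivs. 0 \<le> fst p \<and> fst p \<le> snd p \<and> snd p \<le> c) \<and>
     (\<forall>i<length ivs. \<forall>j<length ivs. i \<noteq> j \<longrightarrow>
        {fst (ivs!i)..snd (ivs!i)} \<inter> {fst (ivs!j)..snd (ivs!j)} = {}) \<and>
     S = (\<Union>p\<in>set ivs. {fst p..snd p}))"

definition len :: "real set \<Rightarrow> real" where
  "len S = measure lborel S"

definition is_bundle :: "real \<Rightarrow> 'g set \<Rightarrow> real set \<times> 'g set \<Rightarrow> bool" where
  "is_bundle c G B \<longleftrightarrow> is_piece c (fst B) \<and> snd B \<subseteq> G"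

definition bsize :: "real set \<times> 'g set \<Rightarrow> real" where
  "bsize B = len (fst B) + real (card (snd B))"

definition util :: "real set \<times> 'g set \<Rightarrow> real set \<times> 'g set \<Rightarrow> real" where
  "util Ri B = len (fst Ri \<inter> fst B) + real (card (snd Ri \<inter> snd B))"

definition is_allocation :: "real \<Rightarrow> 'g set \<Rightarrow> real \<Rightarrow> real set \<times> 'g set \<Rightarrow> bool" where
  "is_allocation c G \<alpha> A \<longleftrightarrow> is_bundle c G A \<and> bsize A \<le> \<alpha>"

definition genH :: "real \<Rightarrow> real" where
  "genH x = (\<Sum>k. x / (real (Suc k) * (x + real (Suc k))))"

definition gen_PAV :: "'a set \<Rightarrow> ('a \<Rightarrow> real set \<times> 'g set) \<Rightarrow> real \<Rightarrow> 'g set \<Rightarrow> real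
                       \<Rightarrow> real set \<times> 'g set \<Rightarrow> bool" where
  "gen_PAV N R c G \<alpha> A \<longleftrightarrow> is_allocation c G \<alpha> A \<and>
     (\<forall>B. is_allocation c G \<alpha> B \<longrightarrow>
        (\<Sum>i\<in>N. genH (util (R i) B)) \<le> (\<Sum>i\<in>N. genH (util (R i) A)))"

definition common_bundle :: "'a set \<Rightarrow> ('a \<Rightarrow> real set \<times> 'g set) \<Rightarrow> real set \<times> 'g set" where
  "common_bundle S R = ((\<Inter>i\<in>S. fst (R i)), (\<Inter>i\<in>S. snd (R i)))"

definition cohesive :: "'a set \<Rightarrow> ('a \<Rightarrow> real set \<times> 'g set) \<Rightarrow> real \<Rightarrow> real \<Rightarrow> 'a set \<Rightarrow> bool" where
  "cohesive N R \<alpha> t S \<longleftrightarrow> S \<subseteq> N \<and>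
     real (card S) \<ge> t * real (card N) / \<alpha> \<and> bsize (common_bundle S R) \<ge> t"

definition EJR1 :: "'a set \<Rightarrow> ('a \<Rightarrow> real set \<times> 'g set) \<Rightarrow> real \<Rightarrow> real set \<times> 'g set \<Rightarrow> bool" where
  "EJR1 N R \<alpha> A \<longleftrightarrow> (\<forall>t>0. \<forall>S. cohesive N R \<alpha> t S \<longrightarrow> (\<exists>j\<in>S. util (R j) A > t - 1))"

end

theory Submission
  imports Defs
begin

lemma tel_sums:
  assumes "u > 0"
  shows "(\<lambda>k. 1/(u + real k) - 1/(u + real (Suc k))) sums (1/u)"
proof -
  have "(\<lambda>n. 1 / (u + real n)) \<longlonglongrightarrow> (0::real)"
    by (rule tendsto_divide_0[OF tendsto_const filterlim_at_top_imp_at_infinity[OF filterlim_tendsto_add_at_top[OF tendsto_const filterlim_real_sequentially]]])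
  from telescope_sums'[OF this] show ?thesis by simp
qed

definition T :: "real \<Rightarrow> nat \<Rightarrow> real" where
  "T x k = x / (real (Suc k) * (x + real (Suc k)))"

lemma T_bound: assumes "x \<ge> 0" shows "T x k \<le> (x+1) * (1/(1 + real k) - 1/(1 + real (Suc k)))"
proof -
  have e: "(x+1) * (1/(1 + real k) - 1/(1 + real (Suc k))) = (x+1) / (real (Suc k) * (real (Suc k) + 1))"
    by (simp add: field_simps)
  have h: "x * (real (Suc k) + 1) \<le> (x+1) * (x + real (Suc k))"
    using assms by (simp add: algebra_simps)
  have "x / (real (Suc k) * (x + real (Suc k))) \<le> (x+1) / (real (Suc k) * (real (Suc k) + 1))"
    using assms h by (simp add: divide_simps)
  thus ?thesis unfolding T_def e .
qed

lemma T_nonneg: "x \<ge> 0 \<Longrightarrow> T x k \<ge> 0"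
  unfolding T_def by simp

lemma T_summable: assumes "x \<ge> 0" shows "summable (T x)"
proof -
  have s: "summable (\<lambda>k. (x+1) * (1/(1 + real k) - 1/(1 + real (Suc k))))"
    using tel_sums[of 1] by (intro summable_mult) (auto simp: sums_iff)
  show ?thesis
    by (rule summable_comparison_test'[OF s, of 0]) (use T_bound[OF assms] T_nonneg[OF assms] in auto)
qed

lemma genH_T: "genH x = suminf (T x)"
  unfolding genH_def T_def by simp

lemma genH_diff:
  assumes "a \<ge> 0" "b \<ge> 0"
  shows "(\<lambda>k. (b - a) / ((a + real (Suc k)) * (b + real (Suc k)))) sums (genH b - genH a)"
proof -
  have "(\<lambda>k. T b k - T a k) sums (genH b - genH a)"
    unfolding genH_T using T_summable[OF assms(2)] T_summable[OF assms(1)]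
    by (intro sums_diff) (auto simp: summable_sums)
  moreover have "T b k - T a k = (b - a) / ((a + real (Suc k)) * (b + real (Suc k)))" for k
  proof -
    have T': "T x k = 1 / real (Suc k) - 1 / (x + real (Suc k))" if "x \<ge> 0" for x
    proof -
      have "x + real (Suc k) > 0" using that by auto
      thus ?thesis unfolding T_def by (simp add: field_simps)
    qed
    have "a + real (Suc k) > 0" "b + real (Suc k) > 0" using assms by auto
    hence "1 / (a + real (Suc k)) - 1 / (b + real (Suc k)) = (b - a) / ((a + real (Suc k)) * (b + real (Suc k)))"
      by (simp add: field_simps)
    thus ?thesis using T'[OF assms(1)] T'[OF assms(2)] by simp
  qed
  ultimately show ?thesis by simp
qed

lemma genH_mono:
  assumes "0 \<le> a" "a \<le> b" shows "genH a \<le> genH b"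
proof -
  have b0: "0 \<le> b" using assms by simp
  have "0 \<le> (b - a) / ((a + real (Suc k)) * (b + real (Suc k)))" for k
    using assms by (intro divide_nonneg_pos mult_pos_pos) auto
  from sums_le[OF this sums_zero genH_diff[OF assms(1) b0]] show ?thesis by simp
qed

lemma genH_gain:
  assumes "u \<ge> 0" "0 \<le> b" "b \<le> 1"
  shows "genH (u + 1 - b) - genH u \<ge> (1 - b) / (u + 1)"
proof -
  have s1: "(\<lambda>k. (1-b) * (1/((u+1) + real k) - 1/((u+1) + real (Suc k)))) sums ((1-b) * (1/(u+1)))"
    using tel_sums[of "u+1"] assms by (intro sums_mult) auto
  have e: "(u + 1 - b) - u = 1 - b" by simp
  have s2: "(\<lambda>k. (1 - b) / ((u + real (Suc k)) * ((u + 1 - b) + real (Suc k)))) sums (genH (u + 1 - b) - genH u)"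
  proof -
    have "0 \<le> u + 1 - b" using assms by simp
    from genH_diff[OF assms(1) this] show ?thesis by (simp only: e)
  qed
  have le: "(1-b) * (1/((u+1) + real k) - 1/((u+1) + real (Suc k))) \<le>
     (1 - b) / ((u + real (Suc k)) * ((u + 1 - b) + real (Suc k)))" for k
  proof -
    have "(1-b) * (1/((u+1) + real k) - 1/((u+1) + real (Suc k))) = (1-b) / ((u + real (Suc k)) * (u + 1 + real (Suc k)))"
      using assms by (simp add: field_simps)
    also have "\<dots> \<le> (1-b) / ((u + real (Suc k)) * ((u + 1 - b) + real (Suc k)))"
    proof (rule divide_left_mono)
      show "(u + real (Suc k)) * (u + 1 - b + real (Suc k)) \<le> (u + real (Suc k)) * (u + 1 + real (Suc k))"
        using assms by (intro mult_left_mono) auto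
      show "0 \<le> 1 - b" using assms by simp
      show "0 < (u + real (Suc k)) * (u + 1 + real (Suc k)) * ((u + real (Suc k)) * (u + 1 - b + real (Suc k)))"
        using assms by (intro mult_pos_pos) auto
    qed
    finally show ?thesis .
  qed
  from sums_le[OF le s1 s2] show ?thesis by (simp only: times_divide_eq_right mult_1_right)
qed

lemma genH_loss:
  assumes "u > 0" "0 \<le> b" "b \<le> 1" "b \<le> u"
  shows "genH u - genH (u - b) \<le> b / u"
proof -
  have s1: "(\<lambda>k. b * (1/(u + real k) - 1/(u + real (Suc k)))) sums (b * (1/u))"
    using tel_sums[of u] assms by (intro sums_mult) auto
  have e: "u - (u - b) = b" by simp
  have s2: "(\<lambda>k. b / (((u - b) + real (Suc k)) * (u + real (Suc k)))) sums (genH u - genH (u - b))"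
  proof -
    have "0 \<le> u - b" using assms by simp
    have "0 \<le> u" using assms by simp
    from genH_diff[OF \<open>0 \<le> u - b\<close> this] show ?thesis by (simp only: e)
  qed
  have le: "b / (((u - b) + real (Suc k)) * (u + real (Suc k))) \<le> b * (1/(u + real k) - 1/(u + real (Suc k)))" for k
  proof -
    have "b * (1/(u + real k) - 1/(u + real (Suc k))) = b / ((u + real k) * (u + real (Suc k)))"
      using assms by (simp add: field_simps)
    moreover have "b / (((u - b) + real (Suc k)) * (u + real (Suc k))) \<le> b / ((u + real k) * (u + real (Suc k)))"
    proof (rule divide_left_mono)
      show "(u + real k) * (u + real (Suc k)) \<le> ((u - b) + real (Suc k)) * (u + real (Suc k))"
        using assms by (intro mult_right_mono) auto
      show "0 \<le> b" using assms by simp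
      show "0 < ((u - b) + real (Suc k)) * (u + real (Suc k)) * ((u + real k) * (u + real (Suc k)))"
        using assms by (intro mult_pos_pos) auto
    qed
    ultimately show ?thesis by linarith
  qed
  from sums_le[OF le s2 s1] show ?thesis by (simp only: times_divide_eq_right mult_1_right)
qed

abbreviation I :: "real \<times> real \<Rightarrow> real set" where "I p \<equiv> {fst p..snd p}"

lemma merge_step:
  assumes fin: "finite IV" and ord: "\<forall>p\<in>IV. fst p \<le> snd p"
    and dj: "\<forall>p\<in>IV. \<forall>q\<in>IV. p \<noteq> q \<longrightarrow> I p \<inter> I q = {}"
    and ab: "a \<le> b"
  shows "\<exists>IV'. finite IV' \<and> (\<forall>p\<in>IV'. fst p \<le> snd p) \<and>
      (\<forall>p\<in>IV'. \<forall>q\<in>IV'. p \<noteq> q \<longrightarrow> I p \<inter> I q = {}) \<and>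
      {a..b} \<union> (\<Union>p\<in>IV. I p) = (\<Union>p\<in>IV'. I p)"
proof -
  define ov where "ov = {p\<in>IV. I p \<inter> {a..b} \<noteq> {}}"
  define nov where "nov = IV - ov"
  define a' where "a' = Min (insert a (fst ` ov))"
  define b' where "b' = Max (insert b (snd ` ov))"
  have fov: "finite ov" using fin unfolding ov_def by simp
  have a'le: "a' \<le> a" "\<And>p. p \<in> ov \<Longrightarrow> a' \<le> fst p" unfolding a'_def using fov by auto
  have b'ge: "b \<le> b'" "\<And>p. p \<in> ov \<Longrightarrow> snd p \<le> b'" unfolding b'_def using fov by auto
  have a'in: "a' \<in> insert a (fst ` ov)" unfolding a'_def using fov by (intro Min_in) auto
  have b'in: "b' \<in> insert b (snd ` ov)" unfolding b'_def using fov by (intro Max_in) auto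
  have eq: "{a'..b'} = {a..b} \<union> (\<Union>p\<in>ov. I p)"
  proof
    show "{a..b} \<union> (\<Union>p\<in>ov. I p) \<subseteq> {a'..b'}"
      using a'le b'ge by fastforce
    show "{a'..b'} \<subseteq> {a..b} \<union> (\<Union>p\<in>ov. I p)"
    proof
      fix x assume x: "x \<in> {a'..b'}"
      show "x \<in> {a..b} \<union> (\<Union>p\<in>ov. I p)"
      proof (cases "x < a")
        case True
        hence "a' \<noteq> a" using x by auto
        with a'in obtain p where p: "p \<in> ov" "a' = fst p" by auto
        have "I p \<inter> {a..b} \<noteq> {}" using p unfolding ov_def by auto
        then obtain y where "y \<in> I p" "y \<in> {a..b}" by blast
        hence "x \<in> I p" using x p True by auto
        thus ?thesis using p by auto
      next
        case False
        show ?thesis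
        proof (cases "x > b")
          case True
          hence "b' \<noteq> b" using x by auto
          with b'in obtain p where p: "p \<in> ov" "b' = snd p" by auto
          have "I p \<inter> {a..b} \<noteq> {}" using p unfolding ov_def by auto
        then obtain y where "y \<in> I p" "y \<in> {a..b}" by blast
          hence "x \<in> I p" using x p True by auto
          thus ?thesis using p by auto
        next
          case False
          thus ?thesis using \<open>\<not> x < a\<close> by auto
        qed
      qed
    qed
  qed
  define IV' where "IV' = insert (a', b') nov"
  have ivu: "IV = ov \<union> nov" unfolding nov_def ov_def by blast
  have "(\<Union>p\<in>IV'. I p) = {a'..b'} \<union> (\<Union>p\<in>nov. I p)" unfolding IV'_def by simp
  hence un: "{a..b} \<union> (\<Union>p\<in>IV. I p) = (\<Union>p\<in>IV'. I p)"
    unfolding eq ivu by blast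
  have "a' \<le> b'" using a'le(1) b'ge(1) ab by linarith
  hence ord': "\<forall>p\<in>IV'. fst p \<le> snd p"
    unfolding IV'_def nov_def using ord by simp
  have djn: "I (a',b') \<inter> I q = {}" if q: "q \<in> nov" for q
  proof -
    have qIV: "q \<in> IV" and qov: "q \<notin> ov" using q unfolding nov_def by auto
    have "\<not> (I q \<inter> {a..b} \<noteq> {})" using qIV qov unfolding ov_def by simp
    hence "{a..b} \<inter> I q = {}" by (metis Int_commute)
    moreover have "I o' \<inter> I q = {}" if "o' \<in> ov" for o'
    proof -
      have "o' \<in> IV" using that unfolding ov_def by simp
      moreover have "o' \<noteq> q" using that qov by metis
      ultimately show ?thesis using dj qIV by metis
    qed
    ultimately have "({a..b} \<union> (\<Union>p\<in>ov. I p)) \<inter> I q = {}" by blast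
    thus ?thesis unfolding fst_conv snd_conv eq .
  qed
  have dj': "\<forall>p\<in>IV'. \<forall>q\<in>IV'. p \<noteq> q \<longrightarrow> I p \<inter> I q = {}"
  proof (intro ballI impI)
    fix p q assume p: "p \<in> IV'" and q: "q \<in> IV'" and pq: "p \<noteq> q"
    show "I p \<inter> I q = {}"
    proof (cases "p = (a',b')")
      case True
      hence "q \<in> nov" using q pq unfolding IV'_def by auto
      thus ?thesis using djn True by simp
    next
      case pn: False
      hence pn': "p \<in> nov" using p unfolding IV'_def by auto
      show ?thesis
      proof (cases "q = (a',b')")
        case True
        thus ?thesis using djn[OF pn'] by (metis Int_commute)
      next
        case False
        hence "q \<in> nov" using q unfolding IV'_def by auto
        hence "q \<in> IV" "p \<in> IV" using pn' unfolding nov_def by auto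
        thus ?thesis using dj pq by metis
      qed
    qed
  qed
  have "finite IV'" unfolding IV'_def nov_def using fin by simp
  with ord' dj' un show ?thesis by blast
qed

lemma merge:
  assumes "finite F"
  shows "\<exists>IV. finite IV \<and> (\<forall>p\<in>IV. fst p \<le> snd p) \<and>
      (\<forall>p\<in>IV. \<forall>q\<in>IV. p \<noteq> q \<longrightarrow> I p \<inter> I q = {}) \<and>
      (\<Union>p\<in>F. I p) = (\<Union>p\<in>IV. I p)"
  using assms
proof (induction F rule: finite_induct)
  case empty
  show ?case by (rule exI[of _ "{}"]) auto
next
  case (insert x F)
  then obtain IV where IV: "finite IV" "\<forall>p\<in>IV. fst p \<le> snd p"
      "\<forall>p\<in>IV. \<forall>q\<in>IV. p \<noteq> q \<longrightarrow> I p \<inter> I q = {}" "(\<Union>p\<in>F. I p) = (\<Union>p\<in>IV. I p)"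
    by blast
  show ?case
  proof (cases "fst x \<le> snd x")
    case True
    from merge_step[OF IV(1-3) True] obtain IV' where
      "finite IV'" "\<forall>p\<in>IV'. fst p \<le> snd p" "\<forall>p\<in>IV'. \<forall>q\<in>IV'. p \<noteq> q \<longrightarrow> I p \<inter> I q = {}"
      "I x \<union> (\<Union>p\<in>IV. I p) = (\<Union>p\<in>IV'. I p)" by blast
    thus ?thesis using IV(4) by (intro exI[of _ IV']) auto
  next
    case False
    hence "I x = {}" by auto
    thus ?thesis using IV by (intro exI[of _ IV]) auto
  qed
qed

definition fcu :: "real set \<Rightarrow> bool" where
  "fcu S \<longleftrightarrow> (\<exists>F. finite F \<and> S = (\<Union>p\<in>F. I p))"

lemma fcu_piece:
  assumes "fcu S" "S \<subseteq> {0..c}"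
  shows "is_piece c S"
proof -
  obtain F where F: "finite F" "S = (\<Union>p\<in>F. I p)" using assms(1) unfolding fcu_def by blast
  from merge[OF F(1)] obtain IV where IV: "finite IV" "\<forall>p\<in>IV. fst p \<le> snd p"
      "\<forall>p\<in>IV. \<forall>q\<in>IV. p \<noteq> q \<longrightarrow> I p \<inter> I q = {}" "S = (\<Union>p\<in>IV. I p)"
    using F(2) by blast
  obtain ivs where ivs: "set ivs = IV" "distinct ivs" using finite_distinct_list[OF IV(1)] by blast
  have bnd: "\<forall>p\<in>set ivs. 0 \<le> fst p \<and> fst p \<le> snd p \<and> snd p \<le> c"
  proof
    fix p assume p: "p \<in> set ivs"
    hence le: "fst p \<le> snd p" using IV(2) ivs by auto
    hence "fst p \<in> S" "snd p \<in> S" using IV(4) p ivs by auto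
    thus "0 \<le> fst p \<and> fst p \<le> snd p \<and> snd p \<le> c" using assms(2) le by auto
  qed
  have djl: "\<forall>i<length ivs. \<forall>j<length ivs. i \<noteq> j \<longrightarrow>
        {fst (ivs!i)..snd (ivs!i)} \<inter> {fst (ivs!j)..snd (ivs!j)} = {}"
  proof (intro allI impI)
    fix i j assume "i < length ivs" "j < length ivs" "i \<noteq> j"
    hence "ivs!i \<noteq> ivs!j" "ivs!i \<in> IV" "ivs!j \<in> IV" using ivs nth_eq_iff_index_eq by auto
    thus "{fst (ivs!i)..snd (ivs!i)} \<inter> {fst (ivs!j)..snd (ivs!j)} = {}" using IV(3) by blast
  qed
  have "S = (\<Union>p\<in>set ivs. {fst p..snd p})" using IV(4) ivs by simp
  with bnd djl show ?thesis unfolding is_piece_def by blast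
qed

lemma piece_fcu: assumes "is_piece c S" shows "fcu S"
proof -
  obtain ivs where "S = (\<Union>p\<in>set ivs. {fst p..snd p})" using assms unfolding is_piece_def by blast
  thus ?thesis unfolding fcu_def by (intro exI[of _ "set ivs"]) simp
qed

lemma piece_sub: assumes "is_piece c S" shows "S \<subseteq> {0..c}"
proof
  fix x assume x: "x \<in> S"
  obtain ivs where iv: "\<forall>p\<in>set ivs. 0 \<le> fst p \<and> fst p \<le> snd p \<and> snd p \<le> c"
      "S = (\<Union>p\<in>set ivs. {fst p..snd p})" using assms unfolding is_piece_def by blast
  then obtain p where "p \<in> set ivs" "x \<in> {fst p..snd p}" using x by blast
  thus "x \<in> {0..c}" using iv(1) by fastforce
qed

lemma fcu_empty: "fcu {}"
  unfolding fcu_def by (rule exI[of _ "{}"]) simp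

lemma fcu_Icc: "fcu {a..b}"
  unfolding fcu_def by (rule exI[of _ "{(a,b)}"]) simp

lemma fcu_Un: assumes "fcu A" "fcu B" shows "fcu (A \<union> B)"
proof -
  obtain F1 F2 where F: "finite F1" "A = (\<Union>p\<in>F1. I p)" "finite F2" "B = (\<Union>p\<in>F2. I p)"
    using assms unfolding fcu_def by blast
  hence "A \<union> B = (\<Union>p\<in>F1 \<union> F2. I p)" by simp
  thus ?thesis unfolding fcu_def using F by blast
qed

lemma fcu_Int: assumes "fcu A" "fcu B" shows "fcu (A \<inter> B)"
proof -
  obtain F1 F2 where F: "finite F1" "A = (\<Union>p\<in>F1. I p)" "finite F2" "B = (\<Union>p\<in>F2. I p)"
    using assms unfolding fcu_def by blast
  define h where "h = (\<lambda>(p::real\<times>real, q::real\<times>real). (max (fst p) (fst q), min (snd p) (snd q)))"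
  have hI: "I p \<inter> I q = I (h (p,q))" for p q
    unfolding h_def by (simp add: Int_atLeastAtMost)
  have "A \<inter> B = (\<Union>p\<in>h ` (F1 \<times> F2). I p)"
  proof (rule set_eqI)
    fix x
    show "x \<in> A \<inter> B \<longleftrightarrow> x \<in> (\<Union>p\<in>h ` (F1 \<times> F2). I p)"
    proof
      assume "x \<in> A \<inter> B"
      then obtain p q where pq: "p \<in> F1" "q \<in> F2" "x \<in> I p" "x \<in> I q" unfolding F by blast
      hence "x \<in> I (h (p,q))" using hI[of p q] by blast
      thus "x \<in> (\<Union>p\<in>h ` (F1 \<times> F2). I p)" using pq by blast
    next
      assume "x \<in> (\<Union>p\<in>h ` (F1 \<times> F2). I p)"
      then obtain z where z: "z \<in> F1 \<times> F2" "x \<in> I (h z)" by blast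
      obtain p q where zpq: "z = (p,q)" by (cases z)
      have pq: "p \<in> F1" "q \<in> F2" "x \<in> I (h (p,q))" using z zpq by auto
      hence "x \<in> I p" "x \<in> I q" using hI[of p q] by blast+
      thus "x \<in> A \<inter> B" using pq unfolding F by blast
    qed
  qed
  moreover have "finite (h ` (F1 \<times> F2))" using F by simp
  ultimately show ?thesis unfolding fcu_def by blast
qed

lemma fcu_compact: assumes "fcu S" shows "compact S"
proof -
  obtain F where F: "finite F" "S = (\<Union>p\<in>F. I p)" using assms unfolding fcu_def by blast
  show ?thesis unfolding F(2) by (rule compact_UN[OF F(1)]) (rule compact_Icc)
qed

lemma fcu_INT:
  assumes "finite K" "\<And>i. i \<in> K \<Longrightarrow> fcu (f i)" "fcu T0"
  shows "fcu (T0 \<inter> (\<Inter>i\<in>K. f i))"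
  using assms
proof (induction K rule: finite_induct)
  case empty thus ?case by simp
next
  case (insert x K)
  have e: "T0 \<inter> (\<Inter>i\<in>insert x K. f i) = f x \<inter> (T0 \<inter> (\<Inter>i\<in>K. f i))" by blast
  have "fcu (T0 \<inter> (\<Inter>i\<in>K. f i))" using insert.IH insert.prems by blast
  moreover have "fcu (f x)" using insert.prems by blast
  ultimately show ?case unfolding e by (rule fcu_Int[rotated])
qed

lemma cfm: "compact S \<Longrightarrow> S \<in> fmeasurable lborel" by (rule fmeasurable_compact)
lemma csets: "compact S \<Longrightarrow> S \<in> sets lborel" by (rule fmeasurableD[OF fmeasurable_compact])

lemma len_nonneg: "len A \<ge> 0" unfolding len_def by (rule measure_nonneg)

lemma len_mono: "compact A \<Longrightarrow> compact B \<Longrightarrow> A \<subseteq> B \<Longrightarrow> len A \<le> len B"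
  unfolding len_def by (rule measure_mono_fmeasurable[OF _ csets cfm])

lemma len_Un: "compact A \<Longrightarrow> compact B \<Longrightarrow> len (A \<union> B) = len A + len B - len (A \<inter> B)"
  unfolding len_def by (rule measure_Un3[OF cfm cfm])

lemma len_Un_le: assumes "compact A" "compact B" shows "len (A \<union> B) \<le> len A + len B"
  using len_Un[OF assms] len_nonneg[of "A \<inter> B"] by linarith

lemma len_finite: "finite A \<Longrightarrow> len A = 0"
  unfolding len_def by (rule measure_eq_0_null_sets[OF finite_imp_null_set_lborel])

lemma len_null_sub: assumes "compact A" "finite F" "A \<subseteq> F" shows "len A = 0"
proof -
  have "len A \<le> len F" by (rule len_mono[OF assms(1) finite_imp_compact[OF assms(2)] assms(3)])
  thus ?thesis using len_finite[OF assms(2)] len_nonneg[of A] by linarith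
qed

lemma len_Icc: "a \<le> b \<Longrightarrow> len {a..b} = b - a"
  unfolding len_def by (rule measure_lborel_Icc)

lemma len_split:
  assumes E: "compact E" and pq: "0 \<le> p" "p \<le> q"
  shows "len (E \<inter> {0..q}) = len (E \<inter> {0..p}) + len (E \<inter> {p..q})"
proof -
  have e: "E \<inter> {0..q} = (E \<inter> {0..p}) \<union> (E \<inter> {p..q})" using pq by auto
  have c1: "compact (E \<inter> {0..p})" "compact (E \<inter> {p..q})" using E by (auto intro: compact_Int compact_Icc)
  have "len ((E \<inter> {0..p}) \<inter> (E \<inter> {p..q})) = 0"
    by (rule len_null_sub[of _ "{p}"]) (use c1 in \<open>auto intro: compact_Int\<close>)
  thus ?thesis unfolding e using len_Un[OF c1] by linarith
qed

lemma len_Icc_le: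
  assumes E: "compact E" and pq: "p \<le> q"
  shows "len (E \<inter> {p..q}) \<le> q - p"
proof -
  have "len (E \<inter> {p..q}) \<le> len {p..q}"
    by (rule len_mono) (use E in \<open>auto intro: compact_Int compact_Icc\<close>)
  thus ?thesis using len_Icc[OF pq] by simp
qed

lemma len_cont:
  assumes E: "compact E"
  shows "continuous_on {0..c} (\<lambda>x. len (E \<inter> {0..x}))"
proof (rule lipschitz_on_continuous_on[of 1], rule lipschitz_onI)
  fix x y assume x: "x \<in> {0..c}" and y: "y \<in> {0..c}"
  have key: "\<bar>len (E \<inter> {0..b}) - len (E \<inter> {0..a})\<bar> \<le> b - a" if "0 \<le> a" "a \<le> b" for a b
    using len_split[OF E that] len_Icc_le[OF E that(2)] len_nonneg[of "E \<inter> {a..b}"] by linarith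
  show "dist (len (E \<inter> {0..x})) (len (E \<inter> {0..y})) \<le> 1 * dist x y"
  proof (cases "x \<le> y")
    case True
    thus ?thesis using key[of x y] x unfolding dist_real_def by (simp add: abs_minus_commute)
  next
    case False
    thus ?thesis using key[of y x] y unfolding dist_real_def by simp
  qed
qed simp

lemma cut_exists:
  assumes E: "compact E" and c: "0 \<le> c" and v: "0 \<le> v" "v \<le> len (E \<inter> {0..c})"
  shows "\<exists>x. 0 \<le> x \<and> x \<le> c \<and> len (E \<inter> {0..x}) = v"
proof -
  have "len (E \<inter> {0..0}) = 0" by (rule len_null_sub[of _ "{0}"]) (use E in \<open>auto intro: compact_Int compact_Icc\<close>)
  hence "len (E \<inter> {0..0}) \<le> v" using v by simp
  from IVT'[of "\<lambda>x. len (E \<inter> {0..x})", OF this v(2) c len_cont[OF E]] show ?thesis by blast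
qed

lemma piece_compact: "is_piece c S \<Longrightarrow> compact S"
  by (rule fcu_compact[OF piece_fcu])

lemma move:
  fixes AC XC :: "real set" and AG XG YG G :: "'g set"
  assumes A: "is_allocation c G \<alpha> (AC, AG)" and fG: "finite G"
    and XC: "fcu XC" "XC \<subseteq> {0..c}" "len (XC \<inter> AC) = 0"
    and XG: "XG \<subseteq> G" "XG \<inter> AG = {}"
    and X1: "len XC + real (card XG) = 1"
    and pq: "0 \<le> p" "p \<le> q" "q \<le> c"
    and YG: "YG \<subseteq> AG"
    and r: "bsize (AC,AG) + 1 - \<alpha> \<le> len (AC \<inter> {p..q}) + real (card YG)"
  defines "B \<equiv> ((AC \<inter> ({0..p} \<union> {q..c})) \<union> XC, (AG - YG) \<union> XG)"
  shows "is_allocation c G \<alpha> B"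
    and "\<And>Ri. is_bundle c G Ri \<Longrightarrow>
          util Ri B \<ge> util Ri (AC,AG) - (len (fst Ri \<inter> AC \<inter> {p..q}) + real (card (snd Ri \<inter> YG)))"
    and "\<And>Ri. is_bundle c G Ri \<Longrightarrow> XC \<subseteq> fst Ri \<Longrightarrow> XG \<subseteq> snd Ri \<Longrightarrow>
          util Ri B \<ge> util Ri (AC,AG) - (len (fst Ri \<inter> AC \<inter> {p..q}) + real (card (snd Ri \<inter> YG))) + 1"
proof -
  have ACp: "is_piece c AC" and AGG: "AG \<subseteq> G" and sA: "bsize (AC,AG) \<le> \<alpha>"
    using A unfolding is_allocation_def is_bundle_def by auto
  have ACc: "compact AC" using piece_compact[OF ACp] .
  have ACsub: "AC \<subseteq> {0..c}" using piece_sub[OF ACp] .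
  have fAG: "finite AG" using AGG fG by (rule finite_subset)
  have fYG: "finite YG" using YG fAG by (rule finite_subset)
  have fXG: "finite XG" using XG(1) fG by (rule finite_subset)
  define P1 where "P1 = AC \<inter> ({0..p} \<union> {q..c})"
  have P1c: "compact P1" unfolding P1_def using ACc by (intro compact_Int compact_Un compact_Icc)
  have XCc: "compact XC" using fcu_compact[OF XC(1)] .
  have AIc: "compact (AC \<inter> {p..q})" using ACc by (intro compact_Int compact_Icc)
  have P1fcu: "fcu (P1 \<union> XC)" unfolding P1_def
    by (intro fcu_Un fcu_Int piece_fcu[OF ACp] fcu_Icc XC(1))
  have P1sub: "P1 \<union> XC \<subseteq> {0..c}" unfolding P1_def using ACsub XC(2) by blast
  have unA: "P1 \<union> (AC \<inter> {p..q}) = AC"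
  proof
    show "P1 \<union> (AC \<inter> {p..q}) \<subseteq> AC" unfolding P1_def by blast
    show "AC \<subseteq> P1 \<union> (AC \<inter> {p..q})"
    proof
      fix x assume x: "x \<in> AC"
      hence "0 \<le> x" "x \<le> c" using ACsub by auto
      thus "x \<in> P1 \<union> (AC \<inter> {p..q})" unfolding P1_def using x by auto
    qed
  qed
  have inter0: "len (P1 \<inter> (AC \<inter> {p..q})) = 0"
  proof (rule len_null_sub[of _ "{p,q}"])
    show "compact (P1 \<inter> (AC \<inter> {p..q}))" using P1c AIc by (rule compact_Int)
    show "P1 \<inter> (AC \<inter> {p..q}) \<subseteq> {p, q}" unfolding P1_def by auto
  qed simp
  have lenP1: "len P1 = len AC - len (AC \<inter> {p..q})"
    using len_Un[OF P1c AIc] unfolding unA inter0 by linarith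
  have cardYG: "real (card (AG - YG)) = real (card AG) - real (card YG)"
    using card_Diff_subset[OF fYG YG] card_mono[OF fAG YG] by (simp add: of_nat_diff)
  have cardB: "card ((AG - YG) \<union> XG) \<le> card (AG - YG) + card XG" by (rule card_Un_le)
  have lenB: "len (P1 \<union> XC) \<le> len P1 + len XC" by (rule len_Un_le[OF P1c XCc])
  have "bsize B \<le> \<alpha>"
  proof -
    have "bsize B = len (P1 \<union> XC) + real (card ((AG - YG) \<union> XG))"
      unfolding B_def bsize_def P1_def by simp
    also have "\<dots> \<le> len P1 + len XC + (real (card (AG - YG)) + real (card XG))"
      using lenB cardB by (simp add: of_nat_add[symmetric] del: of_nat_add)
    also have "\<dots> = bsize (AC,AG) + 1 - (len (AC \<inter> {p..q}) + real (card YG))"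
      unfolding lenP1 cardYG bsize_def using X1 by simp
    also have "\<dots> \<le> \<alpha>" using r by linarith
    finally show ?thesis .
  qed
  moreover have "is_bundle c G B"
    unfolding is_bundle_def B_def using fcu_piece[OF P1fcu P1sub] AGG XG(1) unfolding P1_def by auto
  ultimately show "is_allocation c G \<alpha> B" unfolding is_allocation_def by simp
  {
    fix Ri assume Ri: "is_bundle c G Ri"
    obtain Ci Gi where RiCG: "Ri = (Ci, Gi)" by (cases Ri)
    have Cic: "compact Ci" and GiG: "Gi \<subseteq> G"
      using Ri piece_compact unfolding RiCG is_bundle_def by auto
    have fGi: "finite Gi" using GiG fG by (rule finite_subset)
    have c1: "compact (Ci \<inter> P1)" "compact (Ci \<inter> AC \<inter> {p..q})" "compact (Ci \<inter> AC)"
      using Cic P1c ACc by (auto intro: compact_Int compact_Icc)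
    have cake1: "len (Ci \<inter> AC) \<le> len (Ci \<inter> P1) + len (Ci \<inter> AC \<inter> {p..q})"
    proof -
      have "Ci \<inter> AC = (Ci \<inter> P1) \<union> (Ci \<inter> AC \<inter> {p..q})" using unA by blast
      thus ?thesis using len_Un_le[OF c1(1,2)] by simp
    qed
    have goods1: "real (card (Gi \<inter> AG)) = real (card (Gi \<inter> (AG - YG))) + real (card (Gi \<inter> YG))"
    proof -
      have "Gi \<inter> AG = (Gi \<inter> (AG - YG)) \<union> (Gi \<inter> YG)" using YG by blast
      moreover have "card ((Gi \<inter> (AG - YG)) \<union> (Gi \<inter> YG)) = card (Gi \<inter> (AG - YG)) + card (Gi \<inter> YG)"
        by (rule card_Un_disjoint) (use fGi in auto)
      ultimately show ?thesis by simp
    qed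
    have uA: "util Ri (AC,AG) = len (Ci \<inter> AC) + real (card (Gi \<inter> AG))"
      unfolding util_def RiCG by simp
    have uB: "util Ri B = len (Ci \<inter> (P1 \<union> XC)) + real (card (Gi \<inter> ((AG - YG) \<union> XG)))"
      unfolding util_def RiCG B_def P1_def by simp
    have c2: "compact (Ci \<inter> (P1 \<union> XC))" using Cic P1c XCc by (intro compact_Int compact_Un)
    have m1: "len (Ci \<inter> P1) \<le> len (Ci \<inter> (P1 \<union> XC))"
      by (rule len_mono[OF c1(1) c2]) blast
    have m2: "card (Gi \<inter> (AG - YG)) \<le> card (Gi \<inter> ((AG - YG) \<union> XG))"
      by (rule card_mono) (use fGi in auto)
    have "util Ri B \<ge> util Ri (AC,AG) - (len (Ci \<inter> AC \<inter> {p..q}) + real (card (Gi \<inter> YG)))"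
      unfolding uA uB using cake1 goods1 m1 m2 by linarith
    thus "util Ri B \<ge> util Ri (AC,AG) - (len (fst Ri \<inter> AC \<inter> {p..q}) + real (card (snd Ri \<inter> YG)))"
      unfolding RiCG by simp
    assume XCi: "XC \<subseteq> fst Ri" and XGi: "XG \<subseteq> snd Ri"
    have XCi': "XC \<subseteq> Ci" and XGi': "XG \<subseteq> Gi" using XCi XGi unfolding RiCG by auto
    have "len (Ci \<inter> (P1 \<union> XC)) = len ((Ci \<inter> P1) \<union> XC)"
      using XCi' by (metis Int_Un_distrib Int_absorb1)
    also have "\<dots> = len (Ci \<inter> P1) + len XC - len ((Ci \<inter> P1) \<inter> XC)"
      by (rule len_Un[OF c1(1) XCc])
    finally have e1: "len (Ci \<inter> (P1 \<union> XC)) = len (Ci \<inter> P1) + len XC - len ((Ci \<inter> P1) \<inter> XC)" .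
    have "len ((Ci \<inter> P1) \<inter> XC) \<le> len (XC \<inter> AC)"
      by (rule len_mono) (use c1 XCc ACc in \<open>auto intro: compact_Int simp: P1_def\<close>)
    hence z: "len ((Ci \<inter> P1) \<inter> XC) = 0" using XC(3) len_nonneg[of "(Ci \<inter> P1) \<inter> XC"] by linarith
    have e2: "card (Gi \<inter> ((AG - YG) \<union> XG)) = card (Gi \<inter> (AG - YG)) + card XG"
    proof -
      have "Gi \<inter> ((AG - YG) \<union> XG) = (Gi \<inter> (AG - YG)) \<union> XG" using XGi' by blast
      moreover have "card ((Gi \<inter> (AG - YG)) \<union> XG) = card (Gi \<inter> (AG - YG)) + card XG"
        by (rule card_Un_disjoint) (use fGi fXG XG(2) in auto)
      ultimately show ?thesis by simp
    qed
    have "util Ri B \<ge> util Ri (AC,AG) - (len (Ci \<inter> AC \<inter> {p..q}) + real (card (Gi \<inter> YG))) + 1"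
      unfolding uA uB e1 z e2 using cake1 goods1 X1 by simp
    thus "util Ri B \<ge> util Ri (AC,AG) - (len (fst Ri \<inter> AC \<inter> {p..q}) + real (card (snd Ri \<inter> YG))) + 1"
      unfolding RiCG by simp
  }
qed

lemma genH_nonneg_diff_S:
  assumes "0 \<le> u" "0 \<le> b" "b \<le> 1" "u - b + 1 \<le> v"
  shows "genH v - genH u \<ge> (1 - b) / (u + 1)"
proof -
  have "genH (u + 1 - b) \<le> genH v" using assms by (intro genH_mono) auto
  thus ?thesis using genH_gain[OF assms(1-3)] by linarith
qed

lemma genH_nonneg_diff_N:
  assumes "0 \<le> u" "0 \<le> b" "b \<le> 1" "b \<le> u" "u - b \<le> v"
  shows "genH v - genH u \<ge> - (b / u)"
proof (cases "u = 0")
  case True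
  hence "b = 0" using assms by simp
  hence "genH u \<le> genH v" using assms True by (intro genH_mono) auto
  thus ?thesis using True by simp
next
  case False
  hence up: "u > 0" using assms by simp
  have "genH (u - b) \<le> genH v" using assms by (intro genH_mono) auto
  thus ?thesis using genH_loss[OF up assms(2-4)] by linarith
qed

lemma gain_sum:
  assumes fN: "finite N" and SN: "S \<subseteq> N"
    and u0: "\<And>i. i \<in> N \<Longrightarrow> 0 \<le> u i"
    and b: "\<And>i. i \<in> N \<Longrightarrow> 0 \<le> b i \<and> b i \<le> 1 \<and> b i \<le> u i"
    and vN: "\<And>i. i \<in> N \<Longrightarrow> u i - b i \<le> v i"
    and vS: "\<And>i. i \<in> S \<Longrightarrow> u i - b i + 1 \<le> v i"
  shows "(\<Sum>i\<in>N. genH (v i)) - (\<Sum>i\<in>N. genH (u i)) \<ge>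
         (\<Sum>i\<in>S. (1 - b i) / (u i + 1)) - (\<Sum>i\<in>N - S. b i / u i)"
proof -
  have fS: "finite S" using SN fN by (rule finite_subset)
  have "(\<Sum>i\<in>N. genH (v i)) - (\<Sum>i\<in>N. genH (u i)) = (\<Sum>i\<in>N. genH (v i) - genH (u i))"
    by (simp add: sum_subtractf)
  also have "\<dots> = (\<Sum>i\<in>S. genH (v i) - genH (u i)) + (\<Sum>i\<in>N - S. genH (v i) - genH (u i))"
    by (subst sum.subset_diff[OF SN fN]) (rule add.commute)
  also have "\<dots> \<ge> (\<Sum>i\<in>S. (1 - b i) / (u i + 1)) + (\<Sum>i\<in>N - S. - (b i / u i))"
  proof (rule add_mono)
    show "(\<Sum>i\<in>S. (1 - b i) / (u i + 1)) \<le> (\<Sum>i\<in>S. genH (v i) - genH (u i))"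
    proof (rule sum_mono)
      fix i assume i: "i \<in> S"
      hence iN: "i \<in> N" using SN by blast
      show "(1 - b i) / (u i + 1) \<le> genH (v i) - genH (u i)"
        using genH_nonneg_diff_S[of "u i" "b i" "v i"] u0[OF iN] b[OF iN] vS[OF i] by blast
    qed
    show "(\<Sum>i\<in>N - S. - (b i / u i)) \<le> (\<Sum>i\<in>N - S. genH (v i) - genH (u i))"
    proof (rule sum_mono)
      fix i assume i: "i \<in> N - S"
      hence iN: "i \<in> N" by blast
      show "- (b i / u i) \<le> genH (v i) - genH (u i)"
        using genH_nonneg_diff_N[of "u i" "b i" "v i"] u0[OF iN] b[OF iN] vN[OF iN] by blast
    qed
  qed
  finally show ?thesis by (simp add: sum_negf)
qed

lemma avg:
  assumes fN: "finite N" and SN: "S \<subseteq> N" and fP: "finite P"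
    and u0: "\<And>i. i \<in> N \<Longrightarrow> 0 \<le> u i"
    and bsum: "\<And>i. i \<in> N \<Longrightarrow> (\<Sum>p\<in>P. b p i) \<le> u i"
    and uS: "\<And>i. i \<in> S \<Longrightarrow> u i \<le> t - 1"
  shows "(\<Sum>p\<in>P. (\<Sum>i\<in>S. (1 - b p i) / (u i + 1)) - (\<Sum>i\<in>N - S. b p i / u i))
          \<ge> real (card S) * ((real (card P) + 1) / t) - real (card N)"
proof -
  have fS: "finite S" using SN fN by (rule finite_subset)
  have e1: "(\<Sum>p\<in>P. (\<Sum>i\<in>S. (1 - b p i) / (u i + 1))) = (\<Sum>i\<in>S. (real (card P) - (\<Sum>p\<in>P. b p i)) / (u i + 1))"
  proof -
    have "(\<Sum>p\<in>P. (\<Sum>i\<in>S. (1 - b p i) / (u i + 1))) = (\<Sum>i\<in>S. (\<Sum>p\<in>P. (1 - b p i) / (u i + 1)))"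
      by (rule sum.swap)
    also have "\<dots> = (\<Sum>i\<in>S. (real (card P) - (\<Sum>p\<in>P. b p i)) / (u i + 1))"
      by (simp add: sum_divide_distrib[symmetric] sum_subtractf)
    finally show ?thesis .
  qed
  have e2: "(\<Sum>p\<in>P. (\<Sum>i\<in>N - S. b p i / u i)) = (\<Sum>i\<in>N - S. (\<Sum>p\<in>P. b p i) / u i)"
    by (subst sum.swap) (simp add: sum_divide_distrib[symmetric])
  have l1: "(\<Sum>i\<in>S. (real (card P) - (\<Sum>p\<in>P. b p i)) / (u i + 1)) \<ge> (\<Sum>i\<in>S. (real (card P) + 1) / t - 1)"
  proof (rule sum_mono)
    fix i assume i: "i \<in> S"
    hence iN: "i \<in> N" using SN by blast
    have up: "u i + 1 > 0" using u0[OF iN] by simp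
    have "(real (card P) - (\<Sum>p\<in>P. b p i)) / (u i + 1) \<ge> (real (card P) - u i) / (u i + 1)"
      using bsum[OF iN] up by (intro divide_right_mono) auto
    moreover have "(real (card P) - u i) / (u i + 1) = (real (card P) + 1) / (u i + 1) - 1"
      using up by (simp add: field_simps)
    moreover have "(real (card P) + 1) / (u i + 1) \<ge> (real (card P) + 1) / t"
      using uS[OF i] up by (intro divide_left_mono) auto
    ultimately show "(real (card P) + 1) / t - 1 \<le> (real (card P) - (\<Sum>p\<in>P. b p i)) / (u i + 1)"
      by linarith
  qed
  have l2: "(\<Sum>i\<in>N - S. (\<Sum>p\<in>P. b p i) / u i) \<le> (\<Sum>i\<in>N - S. 1)"
  proof (rule sum_mono)
    fix i assume i: "i \<in> N - S"
    hence iN: "i \<in> N" by blast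
    show "(\<Sum>p\<in>P. b p i) / u i \<le> 1"
    proof (cases "u i = 0")
      case True thus ?thesis by simp
    next
      case False
      hence "u i > 0" using u0[OF iN] by simp
      thus ?thesis using bsum[OF iN] by simp
    qed
  qed
  have cS: "card (N - S) = card N - card S" using card_Diff_subset[OF fS SN] .
  have cSN: "card S \<le> card N" using card_mono[OF fN SN] .
  have "(\<Sum>p\<in>P. (\<Sum>i\<in>S. (1 - b p i) / (u i + 1)) - (\<Sum>i\<in>N - S. b p i / u i))
      = (\<Sum>i\<in>S. (real (card P) - (\<Sum>p\<in>P. b p i)) / (u i + 1)) - (\<Sum>i\<in>N - S. (\<Sum>p\<in>P. b p i) / u i)"
    by (simp add: sum_subtractf e1 e2)
  moreover have "(\<Sum>i\<in>S. (real (card P) + 1) / t - 1) = real (card S) * ((real (card P) + 1) / t - 1)"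
    by simp
  moreover have "(\<Sum>i\<in>N - S. (1::real)) = real (card N) - real (card S)"
    using cS cSN by (simp add: of_nat_diff)
  ultimately show ?thesis using l1 l2 by (simp add: algebra_simps)
qed

lemma exists_X:
  fixes R :: "'a \<Rightarrow> real set \<times> 'g set"
  assumes A: "is_allocation c G \<alpha> (AC, AG)" and fG: "finite G" and c0: "0 \<le> c"
    and fS: "finite S" and Sne: "S \<noteq> {}" and RS: "\<forall>i\<in>S. is_bundle c G (R i)"
    and big: "bsize (common_bundle S R) \<ge> t"
    and small: "\<forall>j\<in>S. util (R j) (AC,AG) \<le> t - 1"
  shows "\<exists>XC XG. fcu XC \<and> XC \<subseteq> {0..c} \<and> len (XC \<inter> AC) = 0 \<and> XG \<subseteq> G \<and> XG \<inter> AG = {} \<and>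
           len XC + real (card XG) = 1 \<and> (\<forall>j\<in>S. XC \<subseteq> fst (R j) \<and> XG \<subseteq> snd (R j))"
proof -
  have ACp: "is_piece c AC" and AGG: "AG \<subseteq> G"
    using A unfolding is_allocation_def is_bundle_def by auto
  have ACc: "compact AC" by (rule piece_compact[OF ACp])
  define DC where "DC = (\<Inter>i\<in>S. fst (R i))"
  define DG where "DG = (\<Inter>i\<in>S. snd (R i))"
  obtain j0 where j0: "j0 \<in> S" using Sne by blast
  have C0p: "is_piece c (fst (R j0))" and G0G: "snd (R j0) \<subseteq> G"
    using RS j0 unfolding is_bundle_def by auto
  have DC0: "DC \<subseteq> fst (R j0)" unfolding DC_def using j0 by blast
  have DG0: "DG \<subseteq> snd (R j0)" unfolding DG_def using j0 by blast
  have DCsub: "DC \<subseteq> {0..c}" using DC0 piece_sub[OF C0p] by blast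
  have DCeq: "DC = {0..c} \<inter> (\<Inter>i\<in>S. fst (R i))" using DCsub unfolding DC_def by blast
  have DCfcu: "fcu DC" unfolding DCeq
  proof (rule fcu_INT[OF fS _ fcu_Icc])
    fix i assume "i \<in> S"
    hence "is_piece c (fst (R i))" using RS unfolding is_bundle_def by auto
    thus "fcu (fst (R i))" by (rule piece_fcu)
  qed
  have DCc: "compact DC" by (rule fcu_compact[OF DCfcu])
  have fG0: "finite (snd (R j0))" using G0G fG by (rule finite_subset)
  have fDG: "finite DG" using DG0 fG0 by (rule finite_subset)
  have C0c: "compact (fst (R j0))" by (rule piece_compact[OF C0p])
  have u0: "util (R j0) (AC,AG) = len (fst (R j0) \<inter> AC) + real (card (snd (R j0) \<inter> AG))"
    unfolding util_def by simp
  have l1: "len (DC \<inter> AC) \<le> len (fst (R j0) \<inter> AC)"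
    by (rule len_mono) (use DCc C0c ACc DC0 in \<open>auto intro: compact_Int\<close>)
  have l2: "card (DG \<inter> AG) \<le> card (snd (R j0) \<inter> AG)"
    by (rule card_mono) (use fG0 DG0 in auto)
  have bD: "bsize (common_bundle S R) = len DC + real (card DG)"
    unfolding bsize_def common_bundle_def DC_def DG_def by simp
  have key: "len DC - len (DC \<inter> AC) + (real (card DG) - real (card (DG \<inter> AG))) \<ge> 1"
    using big small j0 u0 l1 l2 bD by force
  show ?thesis
  proof (cases "DG - AG = {}")
    case False
    then obtain d where d: "d \<in> DG" "d \<notin> AG" by blast
    have "fcu {}" "{} \<subseteq> {0..c}" "len ({} \<inter> AC) = 0" "{d} \<subseteq> G" "{d} \<inter> AG = {}"
         "len {} + real (card {d}) = 1" "\<forall>j\<in>S. {} \<subseteq> fst (R j) \<and> {d} \<subseteq> snd (R j)"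
      using fcu_empty len_finite[of "{}"] d DG0 G0G unfolding DG_def by auto
    thus ?thesis by blast
  next
    case True
    hence "DG \<inter> AG = DG" by blast
    hence key2: "len DC - len (DC \<inter> AC) \<ge> 1" using key by simp
    obtain ivs where ivs: "\<forall>p\<in>set ivs. 0 \<le> fst p \<and> fst p \<le> snd p \<and> snd p \<le> c"
        "AC = (\<Union>p\<in>set ivs. {fst p..snd p})" using ACp unfolding is_piece_def by blast
    define Q where "Q = {0..c} \<inter> (\<Inter>p\<in>set ivs. {0..fst p} \<union> {snd p..c})"
    define EP where "EP = (\<Union>p\<in>set ivs. {fst p, snd p})"
    have fEP: "finite EP" unfolding EP_def by simp
    have Qfcu: "fcu Q" unfolding Q_def
      by (rule fcu_INT) (auto intro: fcu_Un fcu_Icc)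
    have QA: "Q \<inter> AC \<subseteq> EP"
    proof
      fix x assume x: "x \<in> Q \<inter> AC"
      then obtain p where p: "p \<in> set ivs" "x \<in> {fst p..snd p}" using ivs(2) by blast
      have "x \<in> {0..fst p} \<union> {snd p..c}" using x p(1) unfolding Q_def by blast
      hence "x = fst p \<or> x = snd p" using p(2) by auto
      thus "x \<in> EP" unfolding EP_def using p(1) by blast
    qed
    define Z where "Z = DC \<inter> Q"
    have Zfcu: "fcu Z" unfolding Z_def by (rule fcu_Int[OF DCfcu Qfcu])
    have Zc: "compact Z" by (rule fcu_compact[OF Zfcu])
    have Zsub: "Z \<subseteq> {0..c}" unfolding Z_def using DCsub by blast
    have cov: "DC \<subseteq> Z \<union> (DC \<inter> AC)"
    proof
      fix x assume x: "x \<in> DC"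
      show "x \<in> Z \<union> (DC \<inter> AC)"
      proof (cases "x \<in> AC")
        case True thus ?thesis using x by blast
      next
        case False
        have xc: "0 \<le> x" "x \<le> c" using x DCsub by auto
        have "x \<in> {0..fst p} \<union> {snd p..c}" if p: "p \<in> set ivs" for p
        proof -
          have "x \<notin> {fst p..snd p}" using False p ivs(2) by blast
          hence "x < fst p \<or> x > snd p" by auto
          thus ?thesis using xc by auto
        qed
        moreover have "x \<in> {0..c}" using xc by simp
        ultimately have "x \<in> Q" unfolding Q_def by blast
        thus ?thesis using x unfolding Z_def by blast
      qed
    qed
    have DAc: "compact (DC \<inter> AC)" using DCc ACc by (rule compact_Int)
    have "len DC \<le> len (Z \<union> (DC \<inter> AC))"
      by (rule len_mono[OF DCc _ cov]) (use Zc DAc in \<open>rule compact_Un\<close>)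
    also have "\<dots> \<le> len Z + len (DC \<inter> AC)" by (rule len_Un_le[OF Zc DAc])
    finally have Z1: "len Z \<ge> 1" using key2 by linarith
    have "Z \<inter> {0..c} = Z" using Zsub by blast
    hence "1 \<le> len (Z \<inter> {0..c})" using Z1 by simp
    from cut_exists[OF Zc c0 _ this] obtain x0 where x0: "0 \<le> x0" "x0 \<le> c" "len (Z \<inter> {0..x0}) = 1"
      by auto
    define XC where "XC = Z \<inter> {0..x0}"
    have XCfcu: "fcu XC" unfolding XC_def by (rule fcu_Int[OF Zfcu fcu_Icc])
    have XCc: "compact XC" by (rule fcu_compact[OF XCfcu])
    have "len (XC \<inter> AC) = 0"
    proof (rule len_null_sub[OF _ fEP])
      show "compact (XC \<inter> AC)" using XCc ACc by (rule compact_Int)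
      show "XC \<inter> AC \<subseteq> EP" using QA unfolding XC_def Z_def by blast
    qed
    moreover have "XC \<subseteq> {0..c}" unfolding XC_def using Zsub by blast
    moreover have "\<forall>j\<in>S. XC \<subseteq> fst (R j) \<and> {} \<subseteq> snd (R j)"
      unfolding XC_def Z_def DC_def by blast
    moreover have "len XC + real (card {}) = 1" unfolding XC_def using x0 by simp
    ultimately show ?thesis using XCfcu by blast
  qed
qed

lemma arith1:
  assumes r: "r > 0" "r \<le> 1" and L: "L \<ge> 0"
  shows "real (nat \<lfloor>L / r\<rfloor>) > L - r" "real (nat \<lfloor>L / r\<rfloor>) * r \<le> L"
proof -
  have q0: "L / r \<ge> 0" using r L by simp
  hence f0: "\<lfloor>L / r\<rfloor> \<ge> 0" by simp
  hence e: "real (nat \<lfloor>L / r\<rfloor>) = real_of_int \<lfloor>L / r\<rfloor>" by simp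
  have f1: "real_of_int \<lfloor>L / r\<rfloor> \<le> L / r" by (rule of_int_floor_le)
  have f2: "real_of_int \<lfloor>L / r\<rfloor> > L / r - 1" by linarith
  show "real (nat \<lfloor>L / r\<rfloor>) * r \<le> L"
  proof -
    have "real_of_int \<lfloor>L / r\<rfloor> * r \<le> L / r * r" using f1 r by (intro mult_right_mono) auto
    also have "L / r * r = L" using r by simp
    finally show ?thesis unfolding e .
  qed
  show "real (nat \<lfloor>L / r\<rfloor>) > L - r"
  proof (cases "L \<ge> r")
    case True
    have "(L - r) * r \<le> (L - r) * 1" using True r by (intro mult_left_mono) auto
    hence "L - r \<le> (L - r) / r" using r by (simp add: pos_le_divide_eq)
    also have "(L - r) / r = L / r - 1" using r by (simp add: field_simps)
    finally show ?thesis unfolding e using f2 by linarith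
  next
    case False
    thus ?thesis unfolding e using f0 by linarith
  qed
qed

lemma arith2:
  fixes n cS W \<alpha> t :: real
  assumes "n > 0" "\<alpha> > 0" "t > 0" "cS \<ge> t * n / \<alpha>" "W + 1 > \<alpha>"
  shows "cS * ((W + 1) / t) > n"
proof -
  have a: "cS * ((W + 1) / t) \<ge> (t * n / \<alpha>) * ((W + 1) / t)"
    using assms by (intro mult_right_mono) auto
  have b: "(t * n / \<alpha>) * ((W + 1) / t) = n * ((W + 1) / \<alpha>)" using assms by (simp add: field_simps)
  have c: "n * ((W + 1) / \<alpha>) > n * 1"
    using assms by (intro mult_strict_left_mono) (auto simp: field_simps)
  show ?thesis using a b c by linarith
qed

lemma sum_card_single:
  assumes "finite A" shows "(\<Sum>h\<in>A. real (card (X \<inter> {h}))) = real (card (X \<inter> A))"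
proof -
  have "(\<Sum>h\<in>A. real (card (X \<inter> {h}))) = (\<Sum>h\<in>A. if h \<in> X then 1 else 0)"
    by (rule sum.cong) auto
  also have "\<dots> = (\<Sum>h\<in>A \<inter> X. 1)" using sum.inter_restrict[OF assms, of "\<lambda>_. 1::real" X] by simp
  also have "\<dots> = real (card (X \<inter> A))" by (simp add: Int_commute)
  finally show ?thesis .
qed

lemma util_nonneg: "util Ri B \<ge> 0"
  unfolding util_def using len_nonneg[of "fst Ri \<inter> fst B"] by simp

lemma G0_mono:
  assumes E: "compact E" and ab: "0 \<le> a" "a \<le> b"
  shows "len (E \<inter> {0..a}) \<le> len (E \<inter> {0..b})"
  using len_split[OF E ab] len_nonneg[of "E \<inter> {a..b}"] by linarith

theorem mainTheorem11:
  fixes N :: "'a set" and R :: "'a \<Rightarrow> real set \<times> 'g set"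
    and c :: real and G :: "'g set" and \<alpha> :: real and A :: "real set \<times> 'g set"
  assumes "finite N" and "N \<noteq> {}"
    and "c \<ge> 0" and "finite G" and "max c (real (card G)) > 0"
    and "\<alpha> > 0" and "\<alpha> \<le> c + real (card G)"
    and "\<forall>i\<in>N. is_bundle c G (R i)"
    and "gen_PAV N R c G \<alpha> A"
  shows "EJR1 N R \<alpha> A"
proof -
  note fN = assms(1) and Nne = assms(2) and c0 = assms(3) and fG = assms(4) and alpha0 = assms(6)
    and Rb = assms(8)
  obtain AC AG where Aeq: "A = (AC, AG)" by (cases A)
  have Aall: "is_allocation c G \<alpha> (AC, AG)" using assms(9) unfolding gen_PAV_def Aeq by simp
  have opt: "\<And>B. is_allocation c G \<alpha> B \<Longrightarrow>
      (\<Sum>i\<in>N. genH (util (R i) B)) \<le> (\<Sum>i\<in>N. genH (util (R i) (AC,AG)))"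
    using assms(9) unfolding gen_PAV_def Aeq by blast
  have ACp: "is_piece c AC" and AGG: "AG \<subseteq> G" and sA: "bsize (AC,AG) \<le> \<alpha>"
    using Aall unfolding is_allocation_def is_bundle_def by auto
  have ACc: "compact AC" by (rule piece_compact[OF ACp])
  have ACsub: "AC \<subseteq> {0..c}" by (rule piece_sub[OF ACp])
  have fAG: "finite AG" using AGG fG by (rule finite_subset)
  show ?thesis unfolding EJR1_def Aeq
  proof (intro allI impI)
    fix t S assume t0: "t > 0" and coh: "cohesive N R \<alpha> t S"
    have SN: "S \<subseteq> N" and cardS: "real (card S) \<ge> t * real (card N) / \<alpha>"
      and big: "bsize (common_bundle S R) \<ge> t"
      using coh unfolding cohesive_def by auto
    have fS: "finite S" using SN fN by (rule finite_subset)
    have n0: "real (card N) > 0" using fN Nne by (simp add: card_gt_0_iff)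
    have "t * real (card N) / \<alpha> > 0" using t0 n0 alpha0 by simp
    hence "card S > 0" using cardS by linarith
    hence Sne: "S \<noteq> {}" by auto
    show "\<exists>j\<in>S. util (R j) (AC, AG) > t - 1"
    proof (rule ccontr)
      assume "\<not> (\<exists>j\<in>S. util (R j) (AC, AG) > t - 1)"
      hence small: "\<forall>j\<in>S. util (R j) (AC, AG) \<le> t - 1" by auto
      define u where "u i = util (R i) (AC, AG)" for i
      have u0: "\<And>i. 0 \<le> u i" unfolding u_def by (rule util_nonneg)
      have RS: "\<forall>i\<in>S. is_bundle c G (R i)" using Rb SN by blast
      obtain XC XG where X: "fcu XC" "XC \<subseteq> {0..c}" "len (XC \<inter> AC) = 0" "XG \<subseteq> G" "XG \<inter> AG = {}"
          "len XC + real (card XG) = 1" "\<forall>j\<in>S. XC \<subseteq> fst (R j) \<and> XG \<subseteq> snd (R j)"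
        using exists_X[OF Aall fG c0 fS Sne RS big small] by blast
      define r where "r = bsize (AC,AG) + 1 - \<alpha>"
      have moveD: "(\<Sum>i\<in>S. (1 - (len (fst (R i) \<inter> AC \<inter> {p..q}) + real (card (snd (R i) \<inter> YG)))) / (u i + 1))
           - (\<Sum>i\<in>N - S. (len (fst (R i) \<inter> AC \<inter> {p..q}) + real (card (snd (R i) \<inter> YG))) / u i) \<le> 0"
        if pq: "0 \<le> p" "p \<le> q" "q \<le> c" and YG: "YG \<subseteq> AG"
          and rle: "r \<le> len (AC \<inter> {p..q}) + real (card YG)"
          and bb: "\<And>i. i \<in> N \<Longrightarrow> len (fst (R i) \<inter> AC \<inter> {p..q}) + real (card (snd (R i) \<inter> YG)) \<le> 1 \<and>
                                   len (fst (R i) \<inter> AC \<inter> {p..q}) + real (card (snd (R i) \<inter> YG)) \<le> u i"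
        for p q YG
      proof -
        define b where "b i = len (fst (R i) \<inter> AC \<inter> {p..q}) + real (card (snd (R i) \<inter> YG))" for i
        define B where "B = ((AC \<inter> ({0..p} \<union> {q..c})) \<union> XC, (AG - YG) \<union> XG)"
        have rle': "bsize (AC,AG) + 1 - \<alpha> \<le> len (AC \<inter> {p..q}) + real (card YG)" using rle unfolding r_def .
        note mv = move[OF Aall fG X(1-6) pq YG rle']
        have Ball: "is_allocation c G \<alpha> B" unfolding B_def by (rule mv(1))
        define v where "v i = util (R i) B" for i
        have vN: "u i - b i \<le> v i" if "i \<in> N" for i
          using mv(2)[OF Rb[rule_format, OF that]] unfolding u_def v_def b_def B_def by simp
        have vS: "u i - b i + 1 \<le> v i" if "i \<in> S" for i
        proof -
          have iN: "i \<in> N" using that SN by blast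
          show ?thesis using mv(3)[OF Rb[rule_format, OF iN]] X(7) that unfolding u_def v_def b_def B_def by simp
        qed
        have b0: "0 \<le> b i" for i unfolding b_def using len_nonneg[of "fst (R i) \<inter> AC \<inter> {p..q}"] by simp
        have gs: "(\<Sum>i\<in>N. genH (v i)) - (\<Sum>i\<in>N. genH (u i)) \<ge>
           (\<Sum>i\<in>S. (1 - b i) / (u i + 1)) - (\<Sum>i\<in>N - S. b i / u i)"
        proof (rule gain_sum[OF fN SN])
          show "\<And>i. i \<in> N \<Longrightarrow> 0 \<le> u i" using u0 by blast
          show "\<And>i. i \<in> N \<Longrightarrow> 0 \<le> b i \<and> b i \<le> 1 \<and> b i \<le> u i" using b0 bb unfolding b_def by blast
        qed (use vN vS in auto)
        have "(\<Sum>i\<in>N. genH (v i)) \<le> (\<Sum>i\<in>N. genH (u i))"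
          using opt[OF Ball] unfolding u_def v_def .
        thus ?thesis using gs unfolding b_def by linarith
      qed
      show False
      proof (cases "r \<le> 0")
        case True
        have z: "len (E \<inter> {0..0}) = 0" if "compact E" for E :: "real set"
          by (rule len_null_sub[of _ "{0}"]) (use that in \<open>auto intro: compact_Int\<close>)
        have zi: "len (fst (R i) \<inter> AC \<inter> {0..0}) = 0" if "i \<in> N" for i
        proof -
          have "compact (fst (R i) \<inter> AC)"
            using Rb that ACc piece_compact unfolding is_bundle_def by (blast intro: compact_Int)
          thus ?thesis by (rule z)
        qed
        have "r \<le> len (AC \<inter> {0..0}) + real (card ({}::'g set))" using True len_nonneg[of "AC \<inter> {0..0}"] by simp
        from moveD[of 0 0 "{}", OF _ _ c0 _ this]
        have "(\<Sum>i\<in>S. (1 - (len (fst (R i) \<inter> AC \<inter> {0..0}) + real (card (snd (R i) \<inter> {})))) / (u i + 1))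
           - (\<Sum>i\<in>N - S. (len (fst (R i) \<inter> AC \<inter> {0..0}) + real (card (snd (R i) \<inter> {}))) / u i) \<le> 0"
          using zi u0 by simp
        moreover have "(\<Sum>i\<in>S. (1 - (len (fst (R i) \<inter> AC \<inter> {0..0}) + real (card (snd (R i) \<inter> {})))) / (u i + 1))
            = (\<Sum>i\<in>S. 1 / (u i + 1))"
          by (rule sum.cong) (use zi SN in auto)
        moreover have "(\<Sum>i\<in>N - S. (len (fst (R i) \<inter> AC \<inter> {0..0}) + real (card (snd (R i) \<inter> {}))) / u i) = 0"
          by (rule sum.neutral) (use zi in auto)
        moreover have "(\<Sum>i\<in>S. 1 / (u i + 1)) > 0"
        proof (rule sum_pos[OF fS Sne])
          fix i have "u i + 1 > 0" using u0[of i] by linarith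
          thus "0 < 1 / (u i + 1)" by simp
        qed
        ultimately show False by linarith
      next
        case False
        hence r0: "r > 0" by simp
        have r1: "r \<le> 1" unfolding r_def using sA by simp
        define L where "L = len AC"
        define K where "K = card AG"
        define m where "m = nat \<lfloor>L / r\<rfloor>"
        have L0: "L \<ge> 0" unfolding L_def by (rule len_nonneg)
        have m1: "real m > L - r" and m2: "real m * r \<le> L"
          unfolding m_def using arith1[OF r0 r1 L0] by auto
        define G0 where "G0 x = len (AC \<inter> {0..x})" for x
        have ACL: "len (AC \<inter> {0..c}) = L" unfolding L_def using ACsub by (simp add: Int_absorb2)
        have ex: "\<exists>x. 0 \<le> x \<and> x \<le> c \<and> G0 x = real k * r" if k: "k \<le> m" for k
        proof -
          have "real k * r \<le> real m * r" using k r0 by (intro mult_right_mono) auto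
          hence "real k * r \<le> len (AC \<inter> {0..c})" using m2 ACL by linarith
          moreover have "0 \<le> real k * r" using r0 by simp
          ultimately show ?thesis using cut_exists[OF ACc c0] unfolding G0_def by blast
        qed
        define pt where "pt k = (SOME x. 0 \<le> x \<and> x \<le> c \<and> G0 x = real k * r)" for k
        have pt: "0 \<le> pt k \<and> pt k \<le> c \<and> G0 (pt k) = real k * r" if "k \<le> m" for k
          unfolding pt_def by (rule someI_ex[OF ex[OF that]])
        have ptmono: "pt k \<le> pt (Suc k)" if k: "k < m" for k
        proof (rule ccontr)
          assume "\<not> pt k \<le> pt (Suc k)"
          hence lt: "pt (Suc k) \<le> pt k" by simp
          have "G0 (pt (Suc k)) \<le> G0 (pt k)" unfolding G0_def
            by (rule G0_mono[OF ACc _ lt]) (use pt[of "Suc k"] k in simp)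
          hence "real (Suc k) * r \<le> real k * r" using pt[of k] pt[of "Suc k"] k by simp
          thus False using r0 by (simp add: algebra_simps)
        qed
        have chunk: "len (AC \<inter> {pt k..pt (Suc k)}) = r" if k: "k < m" for k
        proof -
          have "G0 (pt (Suc k)) = G0 (pt k) + len (AC \<inter> {pt k..pt (Suc k)})"
            unfolding G0_def by (rule len_split[OF ACc _ ptmono[OF k]]) (use pt[of k] k in simp)
          thus ?thesis using pt[of k] pt[of "Suc k"] k by (simp add: algebra_simps)
        qed
        have tele: "(\<Sum>k<m. len (E \<inter> {pt k..pt (Suc k)})) \<le> len E" if E: "compact E" for E
        proof -
          have "(\<Sum>k<m. len (E \<inter> {pt k..pt (Suc k)})) = (\<Sum>k<m. len (E \<inter> {0..pt (Suc k)}) - len (E \<inter> {0..pt k}))"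
          proof (rule sum.cong[OF refl])
            fix k assume "k \<in> {..<m}"
            hence k: "k < m" by simp
            have "len (E \<inter> {0..pt (Suc k)}) = len (E \<inter> {0..pt k}) + len (E \<inter> {pt k..pt (Suc k)})"
              by (rule len_split[OF E _ ptmono[OF k]]) (use pt[of k] k in simp)
            thus "len (E \<inter> {pt k..pt (Suc k)}) = len (E \<inter> {0..pt (Suc k)}) - len (E \<inter> {0..pt k})" by simp
          qed
          also have "\<dots> = len (E \<inter> {0..pt m}) - len (E \<inter> {0..pt 0})"
            by (rule sum_lessThan_telescope)
          also have "\<dots> \<le> len E"
          proof -
            have "len (E \<inter> {0..pt m}) \<le> len E"
              by (rule len_mono) (use E in \<open>auto intro: compact_Int\<close>)
            thus ?thesis using len_nonneg[of "E \<inter> {0..pt 0}"] by linarith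
          qed
          finally show ?thesis .
        qed
        define P :: "('g + nat) set" where "P = Inl ` AG \<union> Inr ` {..<m}"
        define pp where "pp = case_sum (\<lambda>_::'g. 0::real) pt"
        define qq where "qq = case_sum (\<lambda>_::'g. 0::real) (\<lambda>k. pt (Suc k))"
        define yy where "yy = case_sum (\<lambda>h::'g. {h}) (\<lambda>_::nat. ({}::'g set))"
        define bb where "bb p i = len (fst (R i) \<inter> AC \<inter> {pp p..qq p}) + real (card (snd (R i) \<inter> yy p))" for p i
        have fP: "finite P" unfolding P_def using fAG by simp
        have disj: "Inl ` AG \<inter> Inr ` {..<m} = {}" by blast
        have cardP: "real (card P) = real K + real m"
        proof -
          have "card P = card (Inl ` AG :: ('g + nat) set) + card (Inr ` {..<m} :: ('g + nat) set)"
            unfolding P_def by (rule card_Un_disjoint) (use fAG disj in auto)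
          also have "\<dots> = K + m" unfolding K_def by (simp add: card_image)
          finally show ?thesis by simp
        qed
        have zc: "len (E \<inter> {0..0}) = 0" if "compact E" for E :: "real set"
          by (rule len_null_sub[of _ "{0}"]) (use that in \<open>auto intro: compact_Int\<close>)
        have Rc: "compact (fst (R i) \<inter> AC)" if "i \<in> N" for i
          using Rb that ACc piece_compact unfolding is_bundle_def by (blast intro: compact_Int)
        have RG: "snd (R i) \<subseteq> G" if "i \<in> N" for i
          using Rb that unfolding is_bundle_def by blast
        have bInl: "bb (Inl h) i = real (card (snd (R i) \<inter> {h}))" if "i \<in> N" for h i
          unfolding bb_def pp_def qq_def yy_def using zc[OF Rc[OF that]] by simp
        have bInr: "bb (Inr k) i = len (fst (R i) \<inter> AC \<inter> {pt k..pt (Suc k)})" for k i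
          unfolding bb_def pp_def qq_def yy_def by simp
        have bnn: "bb p i \<ge> 0" for p i
          unfolding bb_def using len_nonneg[of "fst (R i) \<inter> AC \<inter> {pp p..qq p}"] by simp
        have bsum: "(\<Sum>p\<in>P. bb p i) \<le> u i" if iN: "i \<in> N" for i
        proof -
          have "(\<Sum>p\<in>P. bb p i) = (\<Sum>p\<in>Inl ` AG. bb p i) + (\<Sum>p\<in>Inr ` {..<m}. bb p i)"
            unfolding P_def by (rule sum.union_disjoint) (use fAG disj in auto)
          also have "(\<Sum>p\<in>Inl ` AG. bb p i) = (\<Sum>h\<in>AG. bb (Inl h) i)"
            by (rule sum.reindex_cong[of Inl]) auto
          also have "\<dots> = (\<Sum>h\<in>AG. real (card (snd (R i) \<inter> {h})))" using bInl[OF iN] by simp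
          also have "\<dots> = real (card (snd (R i) \<inter> AG))" by (rule sum_card_single[OF fAG])
          also have "(\<Sum>p\<in>Inr ` {..<m}. bb p i) = (\<Sum>k<m. bb (Inr k) i)"
            by (rule sum.reindex_cong[of Inr]) auto
          also have "\<dots> = (\<Sum>k<m. len (fst (R i) \<inter> AC \<inter> {pt k..pt (Suc k)}))" using bInr by simp
          finally have "(\<Sum>p\<in>P. bb p i) = real (card (snd (R i) \<inter> AG)) + (\<Sum>k<m. len (fst (R i) \<inter> AC \<inter> {pt k..pt (Suc k)}))" .
          moreover have "(\<Sum>k<m. len (fst (R i) \<inter> AC \<inter> {pt k..pt (Suc k)})) \<le> len (fst (R i) \<inter> AC)"
            by (rule tele[OF Rc[OF iN]])
          moreover have "u i = len (fst (R i) \<inter> AC) + real (card (snd (R i) \<inter> AG))"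
            unfolding u_def util_def by simp
          ultimately show ?thesis by linarith
        qed
        have ble: "bb p i \<le> u i" if "p \<in> P" "i \<in> N" for p i
        proof -
          have "bb p i \<le> (\<Sum>p\<in>P. bb p i)" by (rule member_le_sum[OF that(1) _ fP]) (use bnn in auto)
          thus ?thesis using bsum[OF that(2)] by linarith
        qed
        have Dle: "(\<Sum>i\<in>S. (1 - bb p i) / (u i + 1)) - (\<Sum>i\<in>N - S. bb p i / u i) \<le> 0" if pP: "p \<in> P" for p
        proof -
          have cond: "0 \<le> pp p \<and> pp p \<le> qq p \<and> qq p \<le> c \<and> yy p \<subseteq> AG \<and>
                r \<le> len (AC \<inter> {pp p..qq p}) + real (card (yy p)) \<and> (\<forall>i\<in>N. bb p i \<le> 1)"
          proof (cases p)
            case (Inl h)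
            hence h: "h \<in> AG" using pP unfolding P_def by auto
            have "\<forall>i\<in>N. bb p i \<le> 1"
            proof
              fix i assume iN: "i \<in> N"
              have "card (snd (R i) \<inter> {h}) \<le> card {h}" by (rule card_mono) auto
              thus "bb p i \<le> 1" unfolding Inl bInl[OF iN] by simp
            qed
            moreover have "r \<le> len (AC \<inter> {0..0}) + real (card {h})" using r1 len_nonneg[of "AC \<inter> {0..0}"] by simp
            ultimately show ?thesis using c0 h unfolding Inl pp_def qq_def yy_def by simp
          next
            case (Inr k)
            hence k: "k < m" using pP unfolding P_def by auto
            have "\<forall>i\<in>N. bb p i \<le> 1"
            proof
              fix i assume iN: "i \<in> N"
              have "len (fst (R i) \<inter> AC \<inter> {pt k..pt (Suc k)}) \<le> len (AC \<inter> {pt k..pt (Suc k)})"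
                by (rule len_mono) (use Rc[OF iN] ACc in \<open>auto intro: compact_Int\<close>)
              thus "bb p i \<le> 1" unfolding Inr bInr chunk[OF k] using r1 by simp
            qed
            moreover have "0 \<le> pt k" "pt (Suc k) \<le> c" using pt[of k] pt[of "Suc k"] k by auto
            ultimately show ?thesis using ptmono[OF k] chunk[OF k] unfolding Inr pp_def qq_def yy_def by simp
          qed
          have "(\<Sum>i\<in>S. (1 - (len (fst (R i) \<inter> AC \<inter> {pp p..qq p}) + real (card (snd (R i) \<inter> yy p)))) / (u i + 1))
           - (\<Sum>i\<in>N - S. (len (fst (R i) \<inter> AC \<inter> {pp p..qq p}) + real (card (snd (R i) \<inter> yy p))) / u i) \<le> 0"
          proof (rule moveD)
            show "0 \<le> pp p" "pp p \<le> qq p" "qq p \<le> c" "yy p \<subseteq> AG"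
                 "r \<le> len (AC \<inter> {pp p..qq p}) + real (card (yy p))" using cond by auto
            fix i assume iN: "i \<in> N"
            show "len (fst (R i) \<inter> AC \<inter> {pp p..qq p}) + real (card (snd (R i) \<inter> yy p)) \<le> 1 \<and>
                  len (fst (R i) \<inter> AC \<inter> {pp p..qq p}) + real (card (snd (R i) \<inter> yy p)) \<le> u i"
              using cond ble[OF pP iN] iN unfolding bb_def by auto
          qed
          thus ?thesis unfolding bb_def .
        qed
        have "(\<Sum>p\<in>P. (\<Sum>i\<in>S. (1 - bb p i) / (u i + 1)) - (\<Sum>i\<in>N - S. bb p i / u i)) \<le> 0"
          by (rule sum_nonpos) (use Dle in auto)
        moreover have "(\<Sum>p\<in>P. (\<Sum>i\<in>S. (1 - bb p i) / (u i + 1)) - (\<Sum>i\<in>N - S. bb p i / u i))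
          \<ge> real (card S) * ((real (card P) + 1) / t) - real (card N)"
        proof (rule avg[OF fN SN fP])
          show "\<And>i. i \<in> N \<Longrightarrow> 0 \<le> u i" using u0 by blast
          show "\<And>i. i \<in> N \<Longrightarrow> (\<Sum>p\<in>P. bb p i) \<le> u i" by (rule bsum)
          show "\<And>i. i \<in> S \<Longrightarrow> u i \<le> t - 1" using small unfolding u_def by blast
        qed
        moreover have "real (card S) * ((real (card P) + 1) / t) > real (card N)"
        proof (rule arith2[OF n0 alpha0 t0 cardS])
          have "bsize (AC, AG) = L + real K" unfolding bsize_def L_def K_def by simp
          hence "\<alpha> = L + real K + 1 - r" unfolding r_def by simp
          thus "real (card P) + 1 > \<alpha>" using cardP m1 by linarith
        qed
        ultimately show False by linarith
      qed
    qed
  qed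
qed

end
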